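(* For all integers $r\ge0$ and $\nu\ge0$, $$E^{(2r+1)}_{2\nu}=\frac{1}{(2r)!}\sum_{\rho=0}^{r}(-1)^\rho\,\mathcal G^r_\rho\,E_{2\nu+2\rho}.$$
   Context: Generalised Euler numbers $E^{(m)}_{2\nu}$ are defined by $\operatorname{sech}^m x=\sum_{\nu\ge0}E^{(m)}_{2\nu}\,x^{2\nu}/(2\nu)!$, and $E_{2\nu}=E^{(1)}_{2\nu}$ are the Euler numbers. The integers $\mathcal G^r_\rho$ ($0\le\rho\le r$) are defined by $\mathcal G^0_0=1$, $\mathcal G^r_{-1}=\mathcal G^r_{r+1}=0$, and $\mathcal G^r_\rho=(2r-1)^2\mathcal G^{r-1}_\rho+\mathcal G^{r-1}_{\rho-1}$ for $r\ge1$. *)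

theory Defs
  imports "HOL-Computational_Algebra.Formal_Power_Series"
begin

definition fps_cosh_real :: "real fps" where
  "fps_cosh_real = fps_const (1/2) * (fps_exp 1 + fps_exp (-1))"

definition fps_sech_pow :: "nat \<Rightarrow> real fps" where
  "fps_sech_pow m = (inverse fps_cosh_real) ^ m"

(* generalised Euler numbers: sech^m x = \<Sum> E^(m)_k x^k / k! ; E^(m)_{2\<nu>} = gen_euler m (2\<nu>) *)
definition gen_euler :: "nat \<Rightarrow> nat \<Rightarrow> real" where
  "gen_euler m k = fact k * fps_nth (fps_sech_pow m) k"

definition euler_num :: "nat \<Rightarrow> real" where
  "euler_num k = gen_euler 1 k"

(* G r \<rho> = \<G>^r_\<rho>; G^0_0 = 1, G^0_\<rho> = 0 for \<rho> > 0, G^r_{-1} = 0 *)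
fun G :: "nat \<Rightarrow> nat \<Rightarrow> int" where
  "G 0 \<rho> = (if \<rho> = 0 then 1 else 0)"
| "G (Suc r) \<rho> = (2 * int (Suc r) - 1)^2 * G r \<rho> + (if \<rho> = 0 then 0 else G r (\<rho> - 1))"

end

theory Submission imports Defs begin
unbundle fps_syntax

definition Shr :: "real fps" where "Shr = fps_const (1/2) * (fps_exp 1 - fps_exp (-1))"

lemma C0: "fps_cosh_real $ 0 = 1" by (simp add: fps_cosh_real_def)
lemma dC: "fps_deriv fps_cosh_real = Shr"
  by (simp add: fps_cosh_real_def Shr_def algebra_simps flip: fps_const_neg)
lemma dSh: "fps_deriv Shr = fps_cosh_real"
  by (simp add: fps_cosh_real_def Shr_def algebra_simps flip: fps_const_neg)
lemma CSh: "fps_cosh_real^2 - Shr^2 = 1"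
proof -
  have "fps_exp (1::real) * fps_exp (-1) = 1"
    by (metis add.right_inverse fps_exp_add_mult fps_exp_0)
  moreover have "4 * (fps_const (1/2) * fps_const (1/2) :: real fps) = 1"
  proof -
    have "fps_const 4 * (fps_const (1/2) * fps_const (1/2)) = fps_const (4*(1/2*(1/2::real)))"
      by (simp only: fps_const_mult)
    then show ?thesis by (simp add: numeral_fps_const)
  qed
  ultimately show ?thesis
    by (simp add: fps_cosh_real_def Shr_def power2_eq_square algebra_simps flip: fps_const_mult)
qed

lemma key:
  fixes m :: nat
  defines "S \<equiv> inverse fps_cosh_real"
  shows "fps_deriv (fps_deriv (S^m)) = fps_const (real (m^2)) * S^m - fps_const (real (m*(m+1))) * S^(m+2)"
proof -
  let ?C = fps_cosh_real
  have SC: "S * ?C = 1" unfolding S_def by (rule inverse_mult_eq_1) (simp add: C0)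
  have dS: "fps_deriv S = - Shr * S^2" unfolding S_def
    using fps_inverse_deriv[of ?C] by (simp add: C0 dC)
  define T where "T = Shr * S"
  have dSm: "fps_deriv (S^k) = - of_nat k * T * S^k" for k
  proof (cases k)
    case 0 then show ?thesis by simp
  next
    case (Suc j)
    have "fps_deriv (S^Suc j) = of_nat (Suc j) * fps_deriv S * S^j"
      using fps_deriv_power'[of S "Suc j"] by simp
    then show ?thesis using dS Suc by (simp add: T_def power2_eq_square algebra_simps)
  qed
  have T2: "T^2 = 1 - S^2"
  proof -
    have "T^2 = Shr^2 * S^2" by (simp add: T_def power_mult_distrib)
    also have "\<dots> = (?C^2 - 1) * S^2" using CSh by (simp add: algebra_simps)
    also have "\<dots> = (S*?C)^2 - S^2" by (simp add: algebra_simps power_mult_distrib)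
    finally show ?thesis using SC by simp
  qed
  have dT: "fps_deriv T = S^2"
  proof -
    have "fps_deriv T = ?C * S - T^2" unfolding T_def using dS
      by (simp add: dSh power2_eq_square algebra_simps)
    then show ?thesis using SC T2 by (simp add: algebra_simps)
  qed
  have "fps_deriv (fps_deriv (S^m)) = - of_nat m * (S^2 * S^m - of_nat m * T^2 * S^m)"
    using dSm dT by (simp add: algebra_simps power2_eq_square)
  also have "\<dots> = - of_nat m * (S^2 * S^m - of_nat m * (1 - S^2) * S^m)"
    by (simp only: T2)
  also have "\<dots> = of_nat (m^2) * S^m - of_nat (m*(m+1)) * S^(m+2)"
    by (simp add: algebra_simps power2_eq_square power_add)
  also have "\<dots> = fps_const (real (m^2)) * S^m - fps_const (real (m*(m+1))) * S^(m+2)"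
    by (simp only: fps_of_nat)
  finally show ?thesis .
qed

lemma rec_euler:
  "gen_euler m (n+2) = real (m^2) * gen_euler m n - real (m*(m+1)) * gen_euler (m+2) n"
proof -
  have "fps_deriv (fps_deriv (fps_sech_pow m)) $ n =
      (fps_const (real (m^2)) * fps_sech_pow m - fps_const (real (m*(m+1))) * fps_sech_pow (m+2)) $ n"
    using key[of m] by (simp add: fps_sech_pow_def)
  then have "real (n+1) * (real (n+2) * fps_sech_pow m $ (n+2)) =
      real (m^2) * fps_sech_pow m $ n - real (m*(m+1)) * fps_sech_pow (m+2) $ n"
    by (simp del: of_nat_mult of_nat_power)
  then have "fact n * (real (n+1) * (real (n+2) * fps_sech_pow m $ (n+2))) =
      fact n * (real (m^2) * fps_sech_pow m $ n - real (m*(m+1)) * fps_sech_pow (m+2) $ n)" by simp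
  moreover have "fact (n+2) = (fact n * (real (n+1) * real (n+2)) :: real)"
    by (simp add: algebra_simps)
  ultimately show ?thesis unfolding gen_euler_def by (simp add: algebra_simps)
qed

lemma G_zero: "r < \<rho> \<Longrightarrow> G r \<rho> = 0"
  by (induction r arbitrary: \<rho>) auto

theorem mainTheorem4:
  fixes r \<nu> :: nat
  shows "gen_euler (2*r+1) (2*\<nu>) =
    (1 / fact (2*r)) * (\<Sum>\<rho>=0..r. (-1)^\<rho> * of_int (G r \<rho>) * euler_num (2*\<nu> + 2*\<rho>))"
proof (induction r arbitrary: \<nu>)
  case 0
  then show ?case by (simp add: euler_num_def)
next
  case (Suc r)
  define A where "A = (\<lambda>\<nu>. (\<Sum>\<rho>=0..r. (-1)^\<rho> * of_int (G r \<rho>) * euler_num (2*\<nu> + 2*\<rho>)) :: real)"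
  define m where "m = 2*r+1"
  have IH: "gen_euler m (2*\<nu>') = A \<nu>' / fact (2*r)" for \<nu>'
    using Suc.IH[of \<nu>'] by (simp add: A_def m_def)
  have rec: "gen_euler m (2*\<nu>+2) = real (m^2) * gen_euler m (2*\<nu>) - real (m*(m+1)) * gen_euler (m+2) (2*\<nu>)"
    by (rule rec_euler)
  have e: "2*\<nu>+2 = 2*(\<nu>+1)" by simp
  have m0: "real (m*(m+1)) \<noteq> 0" unfolding of_nat_eq_0_iff by (simp add: m_def)
  have g: "gen_euler (m+2) (2*\<nu>) = (real (m^2) * A \<nu> - A (\<nu>+1)) / fact (2*r) / real (m*(m+1))"
  proof -
    have h: "real (m*(m+1)) * gen_euler (m+2) (2*\<nu>) = (real (m^2) * A \<nu> - A (\<nu>+1)) / fact (2*r)"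
      using rec unfolding e IH by (simp add: diff_divide_distrib algebra_simps)
    show ?thesis using h m0 by (metis nonzero_mult_div_cancel_left)
  qed
  have B: "(\<Sum>\<rho>=0..Suc r. (-1)^\<rho> * of_int (G (Suc r) \<rho>) * euler_num (2*\<nu> + 2*\<rho>)) =
     real (m^2) * A \<nu> - A (\<nu>+1)"
  proof -
    have s1: "(\<Sum>\<rho>=0..Suc r. (-1)^\<rho> * of_int ((2 * int (Suc r) - 1)^2 * G r \<rho>) * euler_num (2*\<nu> + 2*\<rho>)) = real (m^2) * A \<nu>"
      by (simp add: sum.atLeast0_atMost_Suc G_zero A_def sum_distrib_left m_def algebra_simps)
    have s2: "(\<Sum>\<rho>=0..Suc r. (-1)^\<rho> * of_int (if \<rho> = 0 then 0 else G r (\<rho> - 1)) * euler_num (2*\<nu> + 2*\<rho>)) = - A (\<nu>+1)"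
      by (subst sum.atLeast0_atMost_Suc_shift) (simp add: A_def sum_negf algebra_simps del: sum.atLeast0_atMost_Suc)
    have "(\<Sum>\<rho>=0..Suc r. (-1)^\<rho> * of_int (G (Suc r) \<rho>) * euler_num (2*\<nu> + 2*\<rho>)) =
      (\<Sum>\<rho>=0..Suc r. (-1)^\<rho> * of_int ((2 * int (Suc r) - 1)^2 * G r \<rho>) * euler_num (2*\<nu> + 2*\<rho>)) +
      (\<Sum>\<rho>=0..Suc r. (-1)^\<rho> * of_int (if \<rho> = 0 then 0 else G r (\<rho> - 1)) * euler_num (2*\<nu> + 2*\<rho>))"
      by (simp only: G.simps of_int_add distrib_left distrib_right sum.distrib)
    then show ?thesis using s1 s2 by simp
  qed
  have f: "fact (2 * Suc r) = (fact (2*r) * real (m*(m+1)) :: real)"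
    by (simp add: m_def algebra_simps)
  have "2 * Suc r + 1 = m + 2" by (simp add: m_def)
  then have "gen_euler (2 * Suc r + 1) (2*\<nu>) = gen_euler (m+2) (2*\<nu>)" by simp
  also have "\<dots> = (1 / fact (2 * Suc r)) * (real (m^2) * A \<nu> - A (\<nu>+1))"
    unfolding g f by simp
  finally show ?case using B by simp
qed

end
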